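(* For every $\delta\in(0,1/10)$ there exists a constant $C_\delta$ such that the following holds. Let $Z_0\in\mathbb H$, $\alpha\in(0,1)$, and $F\in S(\alpha)$ such that $F$ has no fixed point in $\mathbb H$ (i.e. no $Z$ with $F(Z)=Z$) except possibly the points of $Z_0+\mathbb Z$. If $${\rm Im}(Z)\ge{\rm Im}(Z_0)+\frac{1}{2\pi}\Big(\log\log\frac{e}{\alpha}-\log\big(1+2\pi{\rm Im}(Z_0)\big)\Big)+C_\delta,$$ then $|F(Z)-Z-\alpha|\le\delta\alpha$.
   Context: $\mathbb H$ is the upper half-plane and $T(Z)=Z+1$. For real $\alpha$, $S(\alpha)$ is the set of univalent maps $F:\mathbb H\to\mathbb C$ with $F\circ T=T\circ F$ and $F(Z)-Z\to\alpha$ as ${\rm Im}(Z)\to+\infty$. *)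

theory Defs
  imports "HOL-Complex_Analysis.Complex_Analysis"
begin

definition upper_half_plane :: "complex set" where
  "upper_half_plane = {z. Im z > 0}"

text \<open>The class S(alpha): univalent (holomorphic and injective) maps F on the upper
half-plane commuting with the translation T(Z) = Z + 1 and with F(Z) - Z tending to
alpha as Im Z tends to +infinity (uniformly in Re Z).\<close>
definition S_class :: "real \<Rightarrow> (complex \<Rightarrow> complex) set" where
  "S_class \<alpha> = {F. F holomorphic_on upper_half_plane \<and> inj_on F upper_half_plane
      \<and> (\<forall>z\<in>upper_half_plane. F (z + 1) = F z + 1)
      \<and> ((\<lambda>z. F z - z) \<longlongrightarrow> complex_of_real \<alpha>) (filtercomap Im at_top)}"

end

theory Submission
  imports Defs
begin


lemma norm_exp_minus_one_le: "norm (exp z - 1) \<le> exp (norm z) - (1::real)" for z :: complex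
proof -
  have s1: "(\<lambda>n. z^(Suc n) /\<^sub>R fact (Suc n)) sums (exp z - 1)"
    using exp_converges[of z] sums_Suc_iff[of "\<lambda>n. z^n /\<^sub>R fact n" "exp z - 1"] by simp
  have s2: "(\<lambda>n. norm z^(Suc n) /\<^sub>R fact (Suc n)) sums (exp (norm z) - 1)"
    using exp_converges[of "norm z"] sums_Suc_iff[of "\<lambda>n. norm z^n /\<^sub>R fact n" "exp (norm z) - 1"] by simp
  have "norm (exp z - 1) = norm (\<Sum>n. z^(Suc n) /\<^sub>R fact (Suc n))" using s1 sums_unique by metis
  also have "\<dots> \<le> (\<Sum>n. norm (z^(Suc n) /\<^sub>R fact (Suc n)))"
  proof (rule summable_norm)
    have "(\<lambda>n. norm (z^(Suc n) /\<^sub>R fact (Suc n))) = (\<lambda>n. norm z^(Suc n) /\<^sub>R fact (Suc n))"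
      by (simp add: norm_power norm_mult)
    then show "summable (\<lambda>n. norm (z^(Suc n) /\<^sub>R fact (Suc n)))" using s2 sums_summable by metis
  qed
  also have "\<dots> = (\<Sum>n. norm z^(Suc n) /\<^sub>R fact (Suc n))" by (simp add: norm_power norm_mult)
  also have "\<dots> = exp (norm z) - 1" using s2 sums_unique by metis
  finally show ?thesis .
qed

lemma exp_minus_one_le_two: "0 \<le> x \<Longrightarrow> x \<le> 1 \<Longrightarrow> exp x - 1 \<le> 2 * (x::real)"
proof -
  assume x: "0 \<le> x" "x \<le> 1"
  have "exp x \<le> 1 + x + x^2" using exp_bound[of x] x by auto
  moreover have "x^2 \<le> x" using x by (simp add: power2_eq_square mult_left_le_one_le)
  ultimately show ?thesis by linarith
qed

lemma borel_car:
  fixes h :: "complex \<Rightarrow> complex"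
  assumes holo: "h holomorphic_on ball 0 R" and R: "0 < R" and h0: "h 0 = 0"
   and re: "\<And>z. z \<in> ball 0 R \<Longrightarrow> Re (h z) < A"
   and z: "norm z < R"
  shows "norm (h z) \<le> 2 * A * norm z / (R - norm z)"
proof -
  have A: "0 < A" using re[of 0] R h0 by simp
  have den: "2 * of_real A - h v \<noteq> 0" if "v \<in> ball 0 R" for v
  proof
    assume "2 * of_real A - h v = 0"
    then have "Re (2 * of_real A - h v) = 0" by simp
    then show False using re[OF that] A by simp
  qed
  have lt: "norm (h v) < norm (2 * of_real A - h v)" if "v \<in> ball 0 R" for v
  proof -
    have r: "Re (h v) < A" using re[OF that] .
    have "(norm (h v))^2 = (Re (h v))^2 + (Im (h v))^2" by (simp add: cmod_power2)
    moreover have "(norm (2 * of_real A - h v))^2 = (2*A - Re (h v))^2 + (Im (h v))^2"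
      by (simp add: cmod_power2)
    moreover have "(Re (h v))^2 < (2*A - Re (h v))^2"
      using r A by (simp add: power2_eq_square algebra_simps)
    ultimately have "(norm (h v))^2 < (norm (2 * of_real A - h v))^2" by linarith
    then show ?thesis by (simp add: power_less_imp_less_base)
  qed
  define w where "w u = h (of_real R * u) / (2 * of_real A - h (of_real R * u))" for u
  have inb: "of_real R * u \<in> ball 0 R" if "norm u < 1" for u :: complex
    using that R by (simp add: norm_mult)
  have holw: "w holomorphic_on ball 0 1"
    unfolding w_def
    apply (intro holomorphic_intros holomorphic_on_compose_gen[OF _ holo, unfolded o_def])
    using inb den by auto
  have w0: "w 0 = 0" by (simp add: w_def h0)
  have wlt: "norm (w u) < 1" if "norm u < 1" for u
    using lt[OF inb[OF that]] den[OF inb[OF that]] by (simp add: w_def norm_divide divide_less_eq)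
  define u where "u = z / of_real R"
  have nu: "norm u = norm z / R" using R by (simp add: u_def norm_divide)
  have nu1: "norm u < 1" using nu z R by (simp add: divide_less_eq)
  have sw: "norm (w u) \<le> norm u" using Schwarz_Lemma(1)[OF holw w0 wlt nu1] by auto
  have zu: "of_real R * u = z" using R by (simp add: u_def)
  have dz: "2 * of_real A - h z \<noteq> 0" using den z by simp
  have weq: "w u = h z / (2 * of_real A - h z)" by (simp add: w_def zu)
  have w1: "1 + w u \<noteq> 0"
  proof
    assume "1 + w u = 0" then have "w u = -1" by (simp add: add_eq_0_iff)
    then show False using wlt[OF nu1] by simp
  qed
  have heq: "h z = 2 * of_real A * w u / (1 + w u)"
    using dz w1 by (simp add: weq field_simps)
  have "norm (h z) = 2 * A * norm (w u) / norm (1 + w u)" using A by (simp add: heq norm_divide norm_mult)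
  also have "\<dots> \<le> 2 * A * norm (w u) / (1 - norm (w u))"
  proof (rule divide_left_mono)
    show "1 - norm (w u) \<le> norm (1 + w u)" using norm_triangle_ineq2[of 1 "- w u"] norm_minus_commute
      by (metis diff_minus_eq_add norm_diff_ineq norm_one)
    show "0 \<le> 2 * A * norm (w u)" using A by simp
    show "0 < norm (1 + w u) * (1 - norm (w u))" using w1 wlt[OF nu1] by simp
  qed
  also have "\<dots> \<le> 2 * A * norm u / (1 - norm u)"
  proof -
    have "norm (w u) / (1 - norm (w u)) \<le> norm u / (1 - norm u)"
      using sw nu1 wlt[OF nu1] by (simp add: divide_simps algebra_simps)
    then show ?thesis using A by (simp add: mult.assoc times_divide_eq_right[symmetric] del: times_divide_eq_right)
  qed
  also have "\<dots> = 2 * A * norm z / (R - norm z)"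
    using R z by (simp add: nu divide_simps)
  finally show ?thesis .
qed



lemma nonvan_est:
  fixes k :: "complex \<Rightarrow> complex"
  assumes holo: "k holomorphic_on ball 0 R" and R: "0 < R"
    and nz: "\<And>z. z \<in> ball 0 R \<Longrightarrow> k z \<noteq> 0"
    and bd: "\<And>z. z \<in> ball 0 R \<Longrightarrow> norm (k z) \<le> M"
    and z: "norm z \<le> R/2"
  shows "norm (k z - k 0) \<le> norm (k 0) * (exp (4 * (ln (M / norm (k 0)) + 1) * norm z / R) - 1)"
proof -
  have 0: "(0::complex) \<in> ball 0 R" using R by simp
  obtain l where holl: "l holomorphic_on ball 0 R" and el: "\<And>x. x \<in> ball 0 R \<Longrightarrow> exp (l x) = k x"
    using holomorphic_logarithm_exists[OF convex_ball open_ball holo nz 0] by blast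
  have k0: "norm (k 0) > 0" using nz[OF 0] by simp
  have M: "norm (k 0) \<le> M" using bd[OF 0] .
  have Mp: "M > 0" using k0 M by linarith
  define A where "A = ln (M / norm (k 0)) + 1"
  define h where "h x = l x - l 0" for x
  have holh: "h holomorphic_on ball 0 R" unfolding h_def by (intro holomorphic_intros holl)
  have reh: "Re (h x) < A" if x: "x \<in> ball 0 R" for x
  proof -
    have "Re (l x) = ln (norm (k x))" using el[OF x] by (metis ln_exp norm_exp_eq_Re)
    moreover have "Re (l 0) = ln (norm (k 0))" using el[OF 0] by (metis ln_exp norm_exp_eq_Re)
    moreover have "ln (norm (k x)) \<le> ln M" using bd[OF x] nz[OF x] Mp by (subst ln_le_cancel_iff) auto
    ultimately have "Re (h x) \<le> ln M - ln (norm (k 0))" by (simp add: h_def)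
    also have "\<dots> = ln (M / norm (k 0))" using Mp k0 by (simp add: ln_div)
    finally show ?thesis unfolding A_def by linarith
  qed
  have zR: "norm z < R" using z R by linarith
  have "norm (h z) \<le> 2 * A * norm z / (R - norm z)"
    by (rule borel_car[OF holh R _ reh zR]) (simp add: h_def)
  also have "\<dots> \<le> 4 * A * norm z / R"
  proof -
    have A0: "A > 0" using reh[OF 0] by (simp add: h_def)
    have "2 * A * norm z * R \<le> 4 * A * norm z * (R - norm z)"
    proof -
      have "R \<le> 2 * (R - norm z)" using z by (simp add: field_simps)
      then have "(2 * A * norm z) * R \<le> (2 * A * norm z) * (2 * (R - norm z))"
        using A0 by (intro mult_left_mono) auto
      then show ?thesis by (simp add: algebra_simps)
    qed
    then show ?thesis using R zR by (simp add: divide_simps)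
  qed
  finally have hz: "norm (h z) \<le> 4 * A * norm z / R" .
  have zin: "z \<in> ball 0 R" using zR by simp
  have "k z - k 0 = k 0 * (exp (h z) - 1)"
    using el[OF zin] el[OF 0] nz[OF 0] by (simp add: h_def exp_diff algebra_simps)
  then have "norm (k z - k 0) = norm (k 0) * norm (exp (h z) - 1)" by (simp add: norm_mult)
  also have "\<dots> \<le> norm (k 0) * (exp (norm (h z)) - 1)"
    using norm_exp_minus_one_le k0 by (intro mult_left_mono) auto
  also have "\<dots> \<le> norm (k 0) * (exp (4 * A * norm z / R) - 1)"
    using hz k0 by (intro mult_left_mono) auto
  finally show ?thesis unfolding A_def .
qed



lemma pow_sub_one_le: "norm ((1 + w)^n - 1) \<le> (1 + norm w)^n - (1::real)" for w :: complex
proof (induction n)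
  case 0 then show ?case by simp
next
  case (Suc n)
  have "(1 + w)^Suc n - 1 = (1 + w) * ((1 + w)^n - 1) + w" by (simp add: algebra_simps)
  then have "norm ((1 + w)^Suc n - 1) \<le> norm (1 + w) * norm ((1 + w)^n - 1) + norm w"
    by (metis norm_mult norm_triangle_ineq)
  also have "\<dots> \<le> (1 + norm w) * ((1 + norm w)^n - 1) + norm w"
    using Suc norm_triangle_ineq[of 1 w]
    by (intro add_right_mono mult_mono) auto
  also have "\<dots> = (1 + norm w)^Suc n - 1" by (simp add: algebra_simps)
  finally show ?case .
qed

lemma pow_sub_one_le_exp: "norm ((1 + w)^n - 1) \<le> exp (real n * norm w) - 1" for w :: complex
proof -
  have "(1 + norm w)^n \<le> (exp (norm w))^n"
    by (intro power_mono) (auto simp: exp_ge_add_one_self)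
  also have "\<dots> = exp (real n * norm w)" by (simp add: exp_of_nat_mult)
  finally show ?thesis using pow_sub_one_le[of w n] by linarith
qed

lemma prod_near_one: "norm (a - 1) \<le> d/3 \<Longrightarrow> norm (b - 1) \<le> d/3 \<Longrightarrow> 0 \<le> d \<Longrightarrow> d < 1
   \<Longrightarrow> norm (a * b - 1) \<le> (d::real)" for a b :: complex
proof -
  assume a: "norm (a - 1) \<le> d/3" and b: "norm (b - 1) \<le> d/3" and d: "0 \<le> d" "d < 1"
  have "a * b - 1 = (a - 1) * b + (b - 1)" by (simp add: algebra_simps)
  then have "norm (a * b - 1) \<le> norm (a - 1) * norm b + norm (b - 1)"
    by (metis norm_mult norm_triangle_ineq)
  also have "norm b \<le> 1 + d/3" using b norm_triangle_ineq2[of b 1] by simp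
  then have "norm (a - 1) * norm b \<le> d/3 * (1 + d/3)"
    using a d by (intro mult_mono) auto
  then have "norm (a - 1) * norm b + norm (b - 1) \<le> d/3 * (1 + d/3) + d/3" using b by linarith
  also have "\<dots> \<le> d"
  proof -
    have "d * d \<le> d" using d by (simp add: mult_left_le_one_le)
    then show ?thesis using d by (simp add: algebra_simps)
  qed
  finally show ?thesis .
qed

lemma s_log_le_one: "0 < s \<Longrightarrow> s * (1 + ln (1/s)) \<le> (1::real)"
proof -
  assume s: "0 < s"
  have "ln (1/s) \<le> 1/s - 1" using ln_le_minus_one[of "1/s"] s by simp
  then have "s * (1 + ln (1/s)) \<le> s * (1/s)" using s by (intro mult_left_mono) auto
  then show ?thesis using s by simp
qed



lemma final_est:
  fixes g :: "complex \<Rightarrow> complex" and K R \<alpha> \<delta> \<kappa> :: real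
  assumes holo: "g holomorphic_on ball 0 1"
   and R: "0 < R" "R \<le> 1/2"
   and K: "1 \<le> K" and bd: "\<And>q. norm q \<le> R \<Longrightarrow> norm (g q) \<le> K"
   and g0: "g 0 = of_real \<alpha>" and \<alpha>: "0 < \<alpha>" "\<alpha> < 1"
   and zeros: "\<And>q. norm q < 1 \<Longrightarrow> g q = 0 \<Longrightarrow> q = q0"
   and q0: "0 < norm q0" "norm q0 < 1"
   and \<delta>: "0 < \<delta>" "\<delta> < 1"
   and \<kappa>: "\<kappa> = \<delta> * R^4 / (24 * (ln K + 2))"
   and q: "norm q \<le> \<kappa> * norm q0 * (1 + ln (1 / norm q0)) / ln (exp 1 / \<alpha>)"
  shows "norm (g q - of_real \<alpha>) \<le> \<delta> * \<alpha>"
proof -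
  define s where "s = norm q0"
  define L where "L = ln (exp 1 / \<alpha>)"
  define c1 where "c1 = ln K + 1"
  have s: "0 < s" "s < 1" using q0 by (auto simp: s_def)
  have L: "L = 1 - ln \<alpha>" using \<alpha> by (simp add: L_def ln_div)
  have lna: "ln \<alpha> < 0" using \<alpha> by simp
  have L1: "1 \<le> L" using L lna by linarith
  have lnK: "0 \<le> ln K" using K by simp
  have c1: "1 \<le> c1" using lnK by (simp add: c1_def)
  have kap: "0 < \<kappa>" using \<delta> R lnK by (simp add: \<kappa>)
  have kap_eq: "4 * (c1 + 1) * \<kappa> = \<delta> * R^4 / 6"
    using lnK by (simp add: \<kappa> c1_def field_simps)
  have R4: "R^4 \<le> R"
  proof -
    have "R^3 \<le> 1" using R by (intro power_le_one) auto
    then have "R * R^3 \<le> R * 1" using R by (intro mult_left_mono) auto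
    moreover have "R^4 = R * R^3" by (simp add: numeral_eq_Suc)
    ultimately show ?thesis by simp
  qed
  have R4p: "0 < R^4" using R by simp
  have R4h: "R^4 \<le> R / 2"
  proof -
    have "R^3 \<le> R^1" using R by (intro power_decreasing) auto
    then have "R * R^3 \<le> R * (1/2)" using R by (intro mult_left_mono) auto
    moreover have "R^4 = R * R^3" by (simp add: numeral_eq_Suc)
    ultimately show ?thesis by simp
  qed
  have lnKa: "ln (K / \<alpha>) \<le> c1 * L"
  proof -
    have "ln (K / \<alpha>) = ln K - ln \<alpha>" using K \<alpha> by (simp add: ln_div)
    also have "\<dots> = ln K + L - 1" using L by simp
    also have "\<dots> \<le> ln K * L + L" using lnK L1 by (smt (verit) mult_left_le_one_le mult_le_cancel_left1)
    finally show ?thesis by (simp add: c1_def algebra_simps)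
  qed
  have qs: "norm q \<le> \<kappa> * s * (1 + ln (1/s)) / L" using q by (simp add: s_def L_def)
  have qk: "norm q \<le> \<kappa> / L"
  proof -
    have "\<kappa> * s * (1 + ln (1/s)) \<le> \<kappa> * 1" using s_log_le_one[OF s(1)] kap
      by (simp add: mult.assoc mult_left_le)
    then show ?thesis using qs L1 by (smt (verit) divide_right_mono)
  qed
  have qk': "norm q \<le> \<kappa>"
  proof -
    have "\<kappa> / L \<le> \<kappa>" using kap L1 by (simp add: divide_le_eq mult_le_cancel_left1)
    then show ?thesis using qk by linarith
  qed
  have kapR: "\<kappa> \<le> R^4 / 2"
  proof -
    have "\<kappa> * (4 * (c1 + 1)) = \<delta> * R^4 / 6" using kap_eq by (simp add: algebra_simps)
    moreover have "\<delta> * R^4 / 6 \<le> R^4 / 2 * 1" using \<delta> R4p by simp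
    moreover have "R^4 / 2 * 1 \<le> R^4 / 2 * (4 * (c1 + 1))" using c1 R4p by (intro mult_left_mono) auto
    ultimately have "\<kappa> * (4 * (c1 + 1)) \<le> R^4 / 2 * (4 * (c1 + 1))" by linarith
    then show ?thesis using c1 by simp
  qed
  have expo: "4 * (ln (K / \<alpha>) + 1) * norm q / \<rho> \<le> \<delta> / 6" if \<rho>: "R^4 \<le> \<rho>" for \<rho>
  proof -
    have A: "ln (K / \<alpha>) + 1 \<le> (c1 + 1) * L" using lnKa L1 by (simp add: algebra_simps)
    have A0: "0 \<le> ln (K / \<alpha>) + 1" using K \<alpha> lna lnK by (simp add: ln_div)
    have "(ln (K / \<alpha>) + 1) * norm q \<le> ((c1 + 1) * L) * (\<kappa> / L)"
      using A A0 qk by (intro mult_mono) auto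
    also have "\<dots> = (c1 + 1) * \<kappa>" using L1 by simp
    finally have B0: "(ln (K / \<alpha>) + 1) * norm q \<le> (c1 + 1) * \<kappa>" .
    have e1: "4 * (ln (K / \<alpha>) + 1) * norm q = 4 * ((ln (K / \<alpha>) + 1) * norm q)" by (simp only: mult.assoc)
    have e2: "4 * (c1 + 1) * \<kappa> = 4 * ((c1 + 1) * \<kappa>)" by (simp only: mult.assoc)
    have B: "4 * (ln (K / \<alpha>) + 1) * norm q \<le> 4 * (c1 + 1) * \<kappa>" unfolding e1 e2 using B0 by linarith
    have "4 * (ln (K / \<alpha>) + 1) * norm q / \<rho> \<le> 4 * (c1 + 1) * \<kappa> / \<rho>"
    proof -
      have "0 \<le> \<rho>" using \<rho> R4p by linarith
      then show ?thesis using B by (intro divide_right_mono)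
    qed
    also have "\<dots> = \<delta> * R^4 / 6 / \<rho>" by (simp only: kap_eq)
    also have "\<dots> \<le> \<delta> * R^4 / 6 / R^4"
    proof -
      have rp: "0 < \<rho>" using \<rho> R4p by linarith
      show ?thesis using \<rho> R4p \<delta> rp by (intro divide_left_mono) (auto intro: mult_pos_pos)
    qed
    also have "\<dots> = \<delta> / 6" using R4p by simp
    finally show ?thesis .
  qed
  have expo2: "exp x - 1 \<le> \<delta> / 3" if "0 \<le> x" "x \<le> \<delta> / 6" for x
    using exp_minus_one_le_two[of x] that \<delta> by linarith
  show ?thesis
  proof (cases "g q0 = 0 \<and> s < R^4")
    case False
    have nz: "g z \<noteq> 0" if "z \<in> ball 0 (R^4)" for z
    proof
      assume gz: "g z = 0"
      have zn: "norm z < R^4" using that by simp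
      have "norm z < 1" using zn R4 R by linarith
      then have "z = q0" using zeros gz by blast
      then show False using False gz zn by (simp add: s_def)
    qed
    have holo4: "g holomorphic_on ball 0 (R^4)"
      by (rule holomorphic_on_subset[OF holo]) (use R4 R in auto)
    have bd4: "norm (g z) \<le> K" if "z \<in> ball 0 (R^4)" for z
      using bd that R4 by simp
    have "norm (g q - g 0) \<le> norm (g 0) * (exp (4 * (ln (K / norm (g 0)) + 1) * norm q / R^4) - 1)"
    proof (rule nonvan_est[OF holo4 R4p nz bd4])
      show "norm q \<le> R^4 / 2" using qk' kapR by linarith
    qed
    also have "\<dots> \<le> \<alpha> * (\<delta> / 3)"
    proof -
      have "exp (4 * (ln (K / \<alpha>) + 1) * norm q / R^4) - 1 \<le> \<delta> / 3"
      proof (rule expo2)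
        show "4 * (ln (K / \<alpha>) + 1) * norm q / R^4 \<le> \<delta> / 6" using expo by simp
        have A0: "0 \<le> ln (K / \<alpha>) + 1" using K \<alpha> lna lnK by (simp add: ln_div)
        then show "0 \<le> 4 * (ln (K / \<alpha>) + 1) * norm q / R^4" using R4p by simp
      qed
      then show ?thesis using g0 \<alpha> by (simp add: mult_left_mono)
    qed
    finally have X: "norm (g q - g 0) \<le> \<alpha> * (\<delta> / 3)" .
    have "\<alpha> * (\<delta> / 3) \<le> \<delta> * \<alpha>" using \<delta> \<alpha> by (simp add: mult.commute)
    then show ?thesis using X g0 by (simp add: mult.commute)
  next
    case True
    then have gq0: "g q0 = 0" and sR: "s < R^4" by auto
    have q0in: "q0 \<in> ball 0 1" using q0 by simp
    have nonconst: "\<not> g constant_on ball 0 1"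
    proof
      assume "g constant_on ball 0 1"
      then have "g 0 = g q0" using q0in by (auto simp: constant_on_def)
      then show False using gq0 g0 \<alpha> by simp
    qed
    obtain h r n where n: "0 < n" and r: "0 < r" and rsub: "ball q0 r \<subseteq> ball 0 1"
      and holh: "h holomorphic_on ball q0 r"
      and geq: "\<And>w. w \<in> ball q0 r \<Longrightarrow> g w = (w - q0)^n * h w"
      and hnz: "\<And>w. w \<in> ball q0 r \<Longrightarrow> h w \<noteq> 0"
      using holomorphic_factor_zero_nonconstant[OF holo open_ball connected_ball q0in gq0 nonconst]
      by metis
    define k where "k w = (if w = q0 then h q0 else g w / (w - q0)^n)" for w
    have kh: "k w = h w" if "w \<in> ball q0 r" for w
    proof (cases "w = q0")
      case False
      then show ?thesis using geq[OF that] by (simp add: k_def)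
    qed (simp add: k_def)
    have gk: "g w = (w - q0)^n * k w" if "w \<in> ball 0 1" for w
    proof (cases "w = q0")
      case True then show ?thesis using gq0 n by (simp add: k_def)
    next
      case False then show ?thesis by (simp add: k_def)
    qed
    have holk1: "k holomorphic_on (ball 0 1 - {q0})"
    proof (rule holomorphic_transform[of "\<lambda>w. g w / (w - q0)^n"])
      show "(\<lambda>w. g w / (w - q0)^n) holomorphic_on ball 0 1 - {q0}"
        by (intro holomorphic_intros holomorphic_on_subset[OF holo]) auto
    qed (simp add: k_def)
    have holk2: "k holomorphic_on ball q0 r"
      by (rule holomorphic_transform[OF holh]) (simp add: kh)
    have uni: "ball 0 1 = (ball 0 1 - {q0}) \<union> ball q0 r" using rsub r q0in by auto
    have holk: "k holomorphic_on ball 0 1"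
      by (subst uni, rule holomorphic_on_Un[OF holk1 holk2]) auto
    have knz: "k w \<noteq> 0" if "w \<in> ball 0 1" for w
    proof (cases "w = q0")
      case True then show ?thesis using hnz[of q0] r by (simp add: k_def)
    next
      case False
      have "g w \<noteq> 0" using zeros False that by auto
      then show ?thesis using False by (simp add: k_def)
    qed
    define M where "M = K * (2 / R)^n"
    have holkR: "k holomorphic_on ball 0 R"
      by (rule holomorphic_on_subset[OF holk]) (use R in auto)
    have bdk: "norm (k w) \<le> M" if "w \<in> ball 0 R" for w
    proof (rule maximum_modulus_frontier[of k "ball 0 R"])
      show "k holomorphic_on interior (ball 0 R)" using holkR by simp
      show "continuous_on (closure (ball 0 R)) k" using R
        by (auto intro!: holomorphic_on_imp_continuous_on holomorphic_on_subset[OF holk])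
      show "bounded (ball 0 R)" by simp
      show "w \<in> ball 0 R" using that .
      fix z :: complex assume "z \<in> frontier (ball 0 R)"
      then have zR: "norm z = R" using R by (simp add: frontier_ball)
      have zin: "z \<in> ball 0 1" using zR R by simp
      have d: "R / 2 \<le> norm (z - q0)"
      proof -
        have "norm z - norm q0 \<le> norm (z - q0)" by (rule norm_triangle_ineq2)
        moreover have "s \<le> R / 2" using sR R4h by linarith
        ultimately show ?thesis using zR by (simp add: s_def)
      qed
      have "norm (k z) = norm (g z) / norm (z - q0)^n"
      proof -
        have "z \<noteq> q0" using d R by auto
        then show ?thesis using gk[OF zin] by (simp add: norm_mult norm_power)
      qed
      also have "\<dots> \<le> K / (R / 2)^n"
        using bd[of z] zR d R K by (intro frac_le power_mono) auto
      also have "\<dots> = M" by (simp add: M_def power_divide)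
      finally show "norm (k z) \<le> M" .
    qed
    have k0: "k 0 = of_real \<alpha> / (- q0)^n" using q0 g0 by (simp add: k_def)
    have nk0: "norm (k 0) = \<alpha> / s^n" using \<alpha> by (simp add: k0 norm_divide norm_power s_def)
    have Mp: "0 < M" using K R by (simp add: M_def)
    have ls: "ln s < 4 * ln R"
    proof -
      have "ln s < ln (R^4)" using sR s R4p by simp
      then show ?thesis using R by (simp add: ln_realpow)
    qed
    have lR: "ln R \<le> - ln 2"
    proof -
      have "ln R \<le> ln (1/2)" using R by simp
      then show ?thesis by (simp add: ln_div)
    qed
    have nbound: "real n * ln (1/s) \<le> 2 * c1 * L"
    proof -
      have "\<alpha> / s^n \<le> K * (2 / R)^n" using bdk[of 0] R nk0 by (simp add: M_def)
      then have "ln (\<alpha> / s^n) \<le> ln (K * (2 / R)^n)" using \<alpha> s R K by (subst ln_le_cancel_iff) auto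
      then have "ln \<alpha> - real n * ln s \<le> ln K + real n * ln (2 / R)"
        using \<alpha> s R K by (simp add: ln_div ln_mult ln_realpow)
      then have e1: "real n * (ln (R/2) - ln s) \<le> ln K - ln \<alpha>"
        using R by (simp add: ln_div algebra_simps)
      have "ln (1/s) / 2 \<le> ln (R/2) - ln s" using R s ls lR by (simp add: ln_div)
      then have "real n * (ln (1/s) / 2) \<le> real n * (ln (R/2) - ln s)" by (intro mult_left_mono) auto
      also have "\<dots> \<le> ln (K / \<alpha>)" using e1 K \<alpha> by (simp add: ln_div)
      also have "\<dots> \<le> c1 * L" by (rule lnKa)
      finally show ?thesis by simp
    qed
    have ls1: "1 \<le> ln (1/s)"
    proof -
      show ?thesis using ln2_ge_two_thirds s ls lR by (simp add: ln_div)
    qed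
    have qR: "norm q \<le> R / 2" using qk' kapR R4 by linarith
    have k0nz': "k 0 \<noteq> 0" using knz[of 0] by simp
    have kest: "norm (k q - k 0) \<le> norm (k 0) * (\<delta> / 3)"
    proof -
      have "norm (k q - k 0) \<le> norm (k 0) * (exp (4 * (ln (M / norm (k 0)) + 1) * norm q / R) - 1)"
        by (rule nonvan_est[OF holkR R(1) _ bdk qR]) (use knz R in auto)
      also have "\<dots> \<le> norm (k 0) * (\<delta> / 3)"
      proof (rule mult_left_mono[OF expo2])
        have Mk: "M / norm (k 0) = (K / \<alpha>) * (2 * s / R)^n"
          using \<alpha> s R by (simp add: M_def nk0 field_simps power_mult_distrib power_divide)
        have "(2 * s / R)^n \<le> 1" using s R sR R4 R4h by (intro power_le_one) (auto simp: divide_simps)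
        then have "(K / \<alpha>) * (2 * s / R)^n \<le> (K / \<alpha>) * 1" using K \<alpha> by (intro mult_left_mono) auto
        then have "M / norm (k 0) \<le> K / \<alpha>" using Mk by simp
        moreover have "0 < M / norm (k 0)" using Mp nk0 \<alpha> s by simp
        ultimately have lnle: "ln (M / norm (k 0)) \<le> ln (K / \<alpha>)" by simp
        have lnM0: "0 \<le> ln (M / norm (k 0))"
        proof -
          have "norm (k 0) \<le> M" using bdk[of 0] R by simp
          moreover have "0 < norm (k 0)" using k0nz' by simp
          ultimately have "1 \<le> M / norm (k 0)" by simp
          then show ?thesis by simp
        qed
        have "4 * (ln (M / norm (k 0)) + 1) * norm q / R \<le> 4 * (ln (K / \<alpha>) + 1) * norm q / R"
          using lnle R by (intro divide_right_mono mult_right_mono) auto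
        also have "\<dots> \<le> \<delta> / 6" by (rule expo[OF R4])
        finally show "4 * (ln (M / norm (k 0)) + 1) * norm q / R \<le> \<delta> / 6" .
        show "0 \<le> 4 * (ln (M / norm (k 0)) + 1) * norm q / R" using lnM0 R by simp
      qed simp
      finally show ?thesis .
    qed
    define a where "a = k q / k 0"
    define b where "b = (1 - q / q0)^n"
    have k0nz: "k 0 \<noteq> 0" using knz[of 0] by simp
    have ha: "norm (a - 1) \<le> \<delta> / 3"
    proof -
      have "a - 1 = (k q - k 0) / k 0" using k0nz by (simp add: a_def field_simps)
      then show ?thesis using kest k0nz by (simp add: norm_divide divide_le_eq mult.commute)
    qed
    have hb: "norm (b - 1) \<le> \<delta> / 3"
    proof -
      have "norm (b - 1) \<le> exp (real n * norm (- q / q0)) - 1"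
        unfolding b_def using pow_sub_one_le_exp[of "- q / q0" n] by simp
      also have "\<dots> \<le> \<delta> / 3"
      proof (rule expo2)
        show "0 \<le> real n * norm (- q / q0)" by simp
        have nq: "norm (- q / q0) = norm q / s" by (simp add: norm_divide s_def)
        have "real n * (norm q / s) \<le> real n * (\<kappa> * (1 + ln (1/s)) / L)"
          using qs s by (intro mult_left_mono) (auto simp: divide_simps mult.commute mult.left_commute)
        also have "\<dots> = (real n * ln (1/s)) * (\<kappa> * (1 + ln (1/s)) / (L * ln (1/s)))"
        proof -
          have "ln (1/s) \<noteq> 0" "L \<noteq> 0" using ls1 L1 by auto
          then show ?thesis by (simp add: field_simps)
        qed
        also have "\<dots> \<le> (2 * c1 * L) * (\<kappa> * (1 + ln (1/s)) / (L * ln (1/s)))"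
          using nbound kap ls1 L1 by (intro mult_right_mono) auto
        also have "\<dots> = 2 * c1 * \<kappa> * ((1 + ln (1/s)) / ln (1/s))"
          using L1 ls1 by (simp add: field_simps)
        also have "\<dots> \<le> 2 * c1 * \<kappa> * 2"
          using ls1 c1 kap by (intro mult_left_mono) (auto simp: divide_simps)
        also have "\<dots> \<le> \<delta> / 6"
        proof -
          have "4 * c1 * \<kappa> \<le> 4 * (c1 + 1) * \<kappa>" using kap by simp
          also have "\<dots> = \<delta> * R^4 / 6" by (rule kap_eq)
          also have "\<dots> \<le> \<delta> * 1 / 6" using R4 R \<delta> by (intro divide_right_mono mult_left_mono) auto
          finally show ?thesis by simp
        qed
        finally show "real n * norm (- q / q0) \<le> \<delta> / 6" using nq by simp
      qed
      finally show ?thesis .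
    qed
    have qin: "q \<in> ball 0 1" using qR R by simp
    have "g q = of_real \<alpha> * (a * b)"
    proof -
      have "g q = (q - q0)^n * k q" using gk[OF qin] .
      moreover have "of_real \<alpha> = (- q0)^n * k 0" using gk[of 0] g0 by simp
      moreover have "(q - q0)^n = (- q0)^n * b"
        using q0 by (simp add: b_def power_mult_distrib[symmetric] field_simps)
      ultimately show ?thesis using k0nz by (simp add: a_def)
    qed
    then have "g q - of_real \<alpha> = of_real \<alpha> * (a * b - 1)" by (simp add: algebra_simps)
    then have "norm (g q - of_real \<alpha>) = \<alpha> * norm (a * b - 1)" using \<alpha> by (simp add: norm_mult)
    also have "\<dots> \<le> \<alpha> * \<delta>" using prod_near_one[OF ha hb] \<delta> \<alpha> by (intro mult_left_mono) auto
    finally show ?thesis by (simp add: mult.commute)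
  qed
qed



definition qmap :: "complex \<Rightarrow> complex" where
  "qmap Z = exp (2 * of_real pi * \<i> * Z)"

definition gfun :: "(complex \<Rightarrow> complex) \<Rightarrow> real \<Rightarrow> complex \<Rightarrow> complex" where
  "gfun F \<alpha> q = (if q = 0 then of_real \<alpha> else F (Ln q / (2 * of_real pi * \<i>)) - Ln q / (2 * of_real pi * \<i>))"

lemma qmap_norm: "norm (qmap Z) = exp (- 2 * pi * Im Z)"
  by (simp add: qmap_def)

lemma qmap_nz: "qmap Z \<noteq> 0" by (simp add: qmap_def)

lemma qmap_lt1: "Z \<in> upper_half_plane \<Longrightarrow> norm (qmap Z) < 1"
  by (simp add: qmap_norm upper_half_plane_def)

lemma qmap_eq: "qmap Z1 = qmap Z2 \<longleftrightarrow> (\<exists>n::int. Z1 = Z2 + of_int n)"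
proof -
  have "qmap Z1 = qmap Z2 \<longleftrightarrow> (\<exists>n::int. 2 * of_real pi * \<i> * Z1 = 2 * of_real pi * \<i> * Z2 + (of_int (2 * n) * pi) * \<i>)"
    by (simp add: qmap_def exp_eq)
  also have "\<dots> \<longleftrightarrow> (\<exists>n::int. Z1 = Z2 + of_int n)"
  proof -
    have "2 * of_real pi * \<i> * Z1 = 2 * of_real pi * \<i> * Z2 + (of_int (2 * n) * pi) * \<i> \<longleftrightarrow> Z1 = Z2 + of_int n" for n :: int
    proof -
      have "2 * of_real pi * \<i> * Z1 = 2 * of_real pi * \<i> * Z2 + (of_int (2 * n) * pi) * \<i> \<longleftrightarrow>
            (2 * of_real pi * \<i>) * Z1 = (2 * of_real pi * \<i>) * (Z2 + of_int n)"
        by (simp add: algebra_simps)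
      also have "\<dots> \<longleftrightarrow> Z1 = Z2 + of_int n" by (subst mult_cancel_left) simp
      finally show ?thesis .
    qed
    then show ?thesis by simp
  qed
  finally show ?thesis .
qed

lemma qmap_add_int: "qmap (Z + of_int n) = qmap Z"
  using qmap_eq by blast

lemma Ln_branch:
  assumes "q \<noteq> 0"
  shows "qmap (Ln q / (2 * of_real pi * \<i>)) = q"
    and "Im (Ln q / (2 * of_real pi * \<i>)) = - ln (norm q) / (2 * pi)"
proof -
  show "qmap (Ln q / (2 * of_real pi * \<i>)) = q" using assms by (simp add: qmap_def)
  have "Ln q / (2 * of_real pi * \<i>) = - \<i> * Ln q / (2 * of_real pi)" by (simp add: field_simps)
  then show "Im (Ln q / (2 * of_real pi * \<i>)) = - ln (norm q) / (2 * pi)"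
    using assms by (simp add: Im_divide_of_real)
qed

lemma Ln_branch_H:
  assumes "q \<noteq> 0" "norm q < 1"
  shows "Ln q / (2 * of_real pi * \<i>) \<in> upper_half_plane"
proof -
  have "ln (norm q) < 0" using assms by simp
  then show ?thesis using Ln_branch(2)[OF assms(1)] by (simp add: upper_half_plane_def divide_neg_pos)
qed

lemma S_class_shift:
  assumes F: "F \<in> S_class \<alpha>" and z: "z \<in> upper_half_plane"
  shows "F (z + of_int n) = F z + of_int n"
proof -
  have per: "\<And>w. w \<in> upper_half_plane \<Longrightarrow> F (w + 1) = F w + 1" using F by (simp add: S_class_def)
  have H: "w + of_int m \<in> upper_half_plane" if "w \<in> upper_half_plane" for w m
    using that by (simp add: upper_half_plane_def)
  have nat: "F (w + of_nat m) = F w + of_nat m" if "w \<in> upper_half_plane" for w m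
  proof (induction m)
    case 0 then show ?case by simp
  next
    case (Suc m)
    have "w + of_nat m \<in> upper_half_plane" using H[OF that, of "int m"] by simp
    then have "F (w + of_nat m + 1) = F (w + of_nat m) + 1" by (rule per)
    then show ?case using Suc by (simp add: algebra_simps)
  qed
  show ?thesis
  proof (cases "n \<ge> 0")
    case True
    then obtain m where "n = int m" by (metis nonneg_eq_int)
    then show ?thesis using nat[OF z] by simp
  next
    case False
    then obtain m where m: "n = - int m" by (metis neg_int_cases less_le_not_le nle_le)
    have w: "z - of_nat m \<in> upper_half_plane" using H[OF z, of "- int m"] by simp
    have "F (z - of_nat m + of_nat m) = F (z - of_nat m) + of_nat m" by (rule nat[OF w])
    then show ?thesis using m by (simp add: algebra_simps)
  qed
qed

lemma gfun_qmap:
  assumes F: "F \<in> S_class \<alpha>" and Z: "Z \<in> upper_half_plane"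
  shows "gfun F \<alpha> (qmap Z) = F Z - Z"
proof -
  define W where "W = Ln (qmap Z) / (2 * of_real pi * \<i>)"
  have "qmap W = qmap Z" unfolding W_def by (rule Ln_branch(1)[OF qmap_nz])
  then obtain n :: int where n: "W = Z + of_int n" using qmap_eq by blast
  have "gfun F \<alpha> (qmap Z) = F W - W" using qmap_nz by (simp add: gfun_def W_def)
  also have "\<dots> = F Z - Z" using S_class_shift[OF F Z, of n] by (simp add: n)
  finally show ?thesis .
qed



lemma gfun_holo_punct:
  assumes F: "F \<in> S_class \<alpha>"
  shows "gfun F \<alpha> holomorphic_on (ball 0 1 - {0})"
proof -
  have holF: "F holomorphic_on upper_half_plane" using F by (simp add: S_class_def)
  have openH: "open upper_half_plane"
    unfolding upper_half_plane_def by (simp add: open_halfspace_Im_gt)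
  define S1 where "S1 = ball (0::complex) 1 - {0} - \<real>\<^sub>\<le>\<^sub>0"
  define S2 where "S2 = ball (0::complex) 1 - {0} - uminus ` \<real>\<^sub>\<le>\<^sub>0"
  have oS1: "open S1" unfolding S1_def by (intro open_Diff) auto
  have cl: "closed (uminus ` \<real>\<^sub>\<le>\<^sub>0 :: complex set)" by (rule closed_negations[OF closed_nonpos_Reals_complex])
  have oS2: "open S2" unfolding S2_def by (intro open_Diff cl) auto
  define b1 where "b1 q = Ln q / (2 * of_real pi * \<i>)" for q
  define b2 where "b2 q = Ln (- q) / (2 * of_real pi * \<i>) + 1/2" for q
  have hb1: "b1 holomorphic_on S1" unfolding b1_def S1_def
    by (intro holomorphic_intros) auto
  have hb2: "b2 holomorphic_on S2" unfolding b2_def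
    by (intro holomorphic_intros) (metis S2_def Diff_iff image_eqI minus_minus, simp)
  have b1H: "b1 q \<in> upper_half_plane" if "q \<in> S1" for q
    using that Ln_branch_H[of q] by (simp add: S1_def b1_def)
  have b2q: "qmap (b2 q) = q" if "q \<noteq> 0" for q
  proof -
    have "qmap (b2 q) = exp (Ln (- q)) * exp (of_real pi * \<i>)"
      by (simp add: qmap_def b2_def distrib_left exp_add mult.commute mult.left_commute)
    also have "\<dots> = q" using that by simp
    finally show ?thesis .
  qed
  have b2H: "b2 q \<in> upper_half_plane" if "q \<in> S2" for q
  proof -
    have q: "q \<noteq> 0" "norm q < 1" using that by (auto simp: S2_def)
    have "Im (b2 q) = Im (Ln (- q) / (2 * of_real pi * \<i>))" by (simp add: b2_def)
    also have "\<dots> = - ln (norm q) / (2 * pi)" using Ln_branch(2)[of "-q"] q by simp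
    also have "\<dots> > 0" using q by (simp add: divide_neg_pos)
    finally show ?thesis by (simp add: upper_half_plane_def)
  qed
  have h1: "gfun F \<alpha> holomorphic_on S1"
  proof (rule holomorphic_transform[of "\<lambda>q. F (b1 q) - b1 q"])
    show "(\<lambda>q. F (b1 q) - b1 q) holomorphic_on S1"
      by (intro holomorphic_intros holomorphic_on_compose_gen[OF hb1 holF, unfolded o_def] hb1) (use b1H in auto)
    show "\<And>x. x \<in> S1 \<Longrightarrow> F (b1 x) - b1 x = gfun F \<alpha> x"
      by (auto simp: S1_def gfun_def b1_def)
  qed
  have h2: "gfun F \<alpha> holomorphic_on S2"
  proof (rule holomorphic_transform[of "\<lambda>q. F (b2 q) - b2 q"])
    show "(\<lambda>q. F (b2 q) - b2 q) holomorphic_on S2"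
      by (intro holomorphic_intros holomorphic_on_compose_gen[OF hb2 holF, unfolded o_def] hb2) (use b2H in auto)
    show "F (b2 x) - b2 x = gfun F \<alpha> x" if "x \<in> S2" for x
    proof -
      have "x \<noteq> 0" using that by (auto simp: S2_def)
      then have "gfun F \<alpha> x = gfun F \<alpha> (qmap (b2 x))" using b2q by simp
      also have "\<dots> = F (b2 x) - b2 x" by (rule gfun_qmap[OF F b2H[OF that]])
      finally show ?thesis by simp
    qed
  qed
  have uni: "ball 0 1 - {0} = S1 \<union> S2"
  proof
    show "S1 \<union> S2 \<subseteq> ball 0 1 - {0}" by (auto simp: S1_def S2_def)
    show "ball 0 1 - {0} \<subseteq> S1 \<union> S2"
    proof
      fix q :: complex assume q: "q \<in> ball 0 1 - {0}"
      show "q \<in> S1 \<union> S2"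
      proof (rule ccontr)
        assume "q \<notin> S1 \<union> S2"
        then have "q \<in> \<real>\<^sub>\<le>\<^sub>0" "q \<in> uminus ` \<real>\<^sub>\<le>\<^sub>0" using q by (auto simp: S1_def S2_def)
        then have "Re q \<le> 0" "Im q = 0" "Re (- q) \<le> 0" by (auto simp: complex_nonpos_Reals_iff)
        then have "q = 0" by (simp add: complex_eq_iff)
        then show False using q by simp
      qed
    qed
  qed
  show ?thesis unfolding uni by (rule holomorphic_on_Un[OF h1 h2 oS1 oS2])
qed

lemma gfun_tendsto:
  assumes F: "F \<in> S_class \<alpha>"
  shows "(gfun F \<alpha> \<longlongrightarrow> of_real \<alpha>) (at 0)"
proof (rule tendstoI)
  fix e :: real assume e: "0 < e"
  have lim: "((\<lambda>z. F z - z) \<longlongrightarrow> of_real \<alpha>) (filtercomap Im at_top)" using F by (simp add: S_class_def)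
  have "eventually (\<lambda>z. dist (F z - z) (of_real \<alpha>) < e) (filtercomap Im at_top)"
    using tendstoD[OF lim e] .
  then obtain P where P: "eventually P at_top" and PQ: "\<And>z. P (Im z) \<Longrightarrow> dist (F z - z) (of_real \<alpha>) < e"
    unfolding eventually_filtercomap by blast
  obtain b where b: "\<And>y. y \<ge> b \<Longrightarrow> P y" using P unfolding eventually_at_top_linorder by blast
  define b' where "b' = max b 1"
  define d where "d = exp (- 2 * pi * b')"
  have d: "0 < d" by (simp add: d_def)
  show "eventually (\<lambda>q. dist (gfun F \<alpha> q) (of_real \<alpha>) < e) (at 0)"
    unfolding eventually_at
  proof (intro exI[of _ d] conjI ballI impI d)
    fix q :: complex assume q: "q \<noteq> 0 \<and> dist q 0 < d"
    have nq: "norm q < d" "q \<noteq> 0" using q by auto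
    have "ln (norm q) < ln d" using nq d by simp
    then have "ln (norm q) < - 2 * pi * b'" by (simp add: d_def)
    then have "b' < - ln (norm q) / (2 * pi)" by (simp add: field_simps)
    then have "b \<le> Im (Ln q / (2 * of_real pi * \<i>))" using Ln_branch(2)[OF nq(2)] by (simp add: b'_def)
    then have "dist (F (Ln q / (2 * of_real pi * \<i>)) - Ln q / (2 * of_real pi * \<i>)) (of_real \<alpha>) < e"
      using PQ b by blast
    then show "dist (gfun F \<alpha> q) (of_real \<alpha>) < e" using nq by (simp add: gfun_def)
  qed
qed

lemma gfun_holo:
  assumes F: "F \<in> S_class \<alpha>"
  shows "gfun F \<alpha> holomorphic_on ball 0 1"
proof (rule no_isolated_singularity'[of "{0}"])
  show "\<And>z. z \<in> {0} \<Longrightarrow> (gfun F \<alpha> \<longlongrightarrow> gfun F \<alpha> z) (at z within ball 0 1)"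
    using gfun_tendsto[OF F] by (auto simp: gfun_def intro: tendsto_within_subset)
qed (use gfun_holo_punct[OF F] in auto)



lemma univalent_bound:
  fixes f :: "complex \<Rightarrow> complex"
  assumes holf: "f holomorphic_on ball 0 1" and inj: "inj_on f (ball 0 1)" and f0: "f 0 = 0"
    and df: "norm (deriv f 0) = 1" and q: "norm q \<le> 1/4"
  shows "norm (f q) \<le> 2 + 6 * exp (pi * exp (pi * 16))"
proof -
  define \<Omega> where "\<Omega> = f ` ball 0 1"
  have o\<Omega>: "open \<Omega>" unfolding \<Omega>_def by (rule open_mapping_thm3[OF holf open_ball inj])
  obtain gi where holgi: "gi holomorphic_on \<Omega>"
     and dgi: "\<And>z. z \<in> ball 0 1 \<Longrightarrow> deriv f z * deriv gi (f z) = 1"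
     and gif: "\<And>z. z \<in> ball 0 1 \<Longrightarrow> gi (f z) = z"
    using holomorphic_has_inverse[OF holf open_ball inj] unfolding \<Omega>_def by metis
  have z0: "(0::complex) \<in> ball 0 1" by simp
  have "\<exists>w1. w1 \<notin> \<Omega> \<and> norm w1 < 2"
  proof (rule ccontr)
    assume "\<not> (\<exists>w1. w1 \<notin> \<Omega> \<and> norm w1 < 2)"
    then have sub: "ball 0 2 \<subseteq> \<Omega>" by auto
    define h where "h w = gi (2 * w)" for w
    have holh: "h holomorphic_on ball 0 1" unfolding h_def
      by (rule holomorphic_on_compose_gen[OF _ holgi, unfolded o_def]) (auto intro!: holomorphic_intros sub[THEN subsetD] simp: norm_mult)
    have h0: "h 0 = 0" using gif[OF z0] f0 by (simp add: h_def)
    have hlt: "norm (h w) < 1" if "norm w < 1" for w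
    proof -
      have "2 * w \<in> \<Omega>" using sub that by (auto simp: norm_mult)
      then obtain z where z: "z \<in> ball 0 1" "2 * w = f z" by (auto simp: \<Omega>_def)
      then show ?thesis using gif[OF z(1)] by (simp add: h_def)
    qed
    have dh: "norm (deriv h 0) \<le> 1" using Schwarz_Lemma(2)[OF holh h0 hlt, of 0] by simp
    have "0 \<in> \<Omega>" unfolding \<Omega>_def using f0 z0 by (metis image_eqI)
    then have "(gi has_field_derivative deriv gi 0) (at 0)"
      using holgi o\<Omega> by (intro DERIV_deriv_iff_field_differentiable[THEN iffD2] holomorphic_on_imp_differentiable_at)
    then have "((\<lambda>w. gi (2 * w)) has_field_derivative deriv gi 0 * 2) (at 0)"
      using DERIV_chain2[of gi "deriv gi 0" "\<lambda>w. 2 * w" 0 2] by (auto intro!: derivative_eq_intros)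
    then have "deriv h 0 = deriv gi 0 * 2" unfolding h_def by (rule DERIV_imp_deriv)
    moreover have "deriv f 0 * deriv gi 0 = 1" using dgi[OF z0] f0 by simp
    then have "norm (deriv gi 0) = 1" using df by (metis norm_mult norm_one mult_1)
    ultimately have "norm (deriv h 0) = 2" by (simp add: norm_mult)
    then show False using dh by simp
  qed
  then obtain w1 where w1: "w1 \<notin> \<Omega>" "norm w1 < 2" by blast
  have contf: "continuous_on (ball 0 1) f" by (rule holomorphic_on_imp_continuous_on[OF holf])
  have contgi: "continuous_on \<Omega> gi" by (rule holomorphic_on_imp_continuous_on[OF holgi])
  have "homeomorphism (ball 0 1) \<Omega> f gi"
    unfolding homeomorphism_def using contf contgi gif
    by (auto simp: \<Omega>_def image_iff)
  then have "ball (0::complex) 1 homeomorphic \<Omega>" unfolding homeomorphic_def by blast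
  then have sc: "simply_connected \<Omega>"
    by (rule homeomorphic_simply_connected) (simp add: convex_imp_simply_connected)
  then have ucc: "\<forall>C \<in> components (- \<Omega>). \<not> bounded C"
    using simply_connected_eq_unbounded_complement_components[OF o\<Omega>] by blast
  define C where "C = connected_component_set (- \<Omega>) w1"
  have w1C: "w1 \<in> C" using w1 by (simp add: C_def)
  have Csub: "C \<subseteq> - \<Omega>" unfolding C_def by (rule connected_component_subset)
  have Cconn: "connected C" unfolding C_def by simp
  have "C \<in> components (- \<Omega>)" unfolding C_def using w1 by (intro componentsI) simp
  then have "\<not> bounded C" using ucc by blast
  then obtain x where xC: "x \<in> C" and xn: "2 * norm w1 < norm x"
    unfolding bounded_iff by (meson not_le)
  have "connected (norm ` C)" by (intro connected_continuous_image continuous_intros Cconn)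
  then obtain t where t: "t \<in> norm ` C" "t * 1 = 2 * norm w1"
    using connected_ivt_component[of "norm ` C" "norm w1" "norm x" 1 "2 * norm w1"] w1C xC xn
    by auto
  then obtain w2 where w2C: "w2 \<in> C" and w2n: "norm w2 = 2 * norm w1" by auto
  have w2: "w2 \<notin> \<Omega>" using w2C Csub by auto
  have w1nz: "w1 \<noteq> 0" using w1 f0 z0 unfolding \<Omega>_def by (metis image_eqI)
  have d21: "norm w1 \<le> norm (w2 - w1)"
    using norm_triangle_ineq2[of w2 w1] w2n by simp
  have d21': "norm (w2 - w1) \<le> 3 * norm w1"
    using norm_triangle_ineq4[of w2 w1] w2n by simp
  have w12: "w2 - w1 \<noteq> 0" using d21 w1nz by auto
  define S where "S z = (f (z / 2) - w1) / (w2 - w1)" for z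
  have inD: "z / 2 \<in> ball 0 1" if "z \<in> cball 0 1" for z :: complex
    using that by (simp add: norm_divide)
  have holS: "S holomorphic_on cball 0 1" unfolding S_def
    by (intro holomorphic_intros holomorphic_on_compose_gen[OF _ holf, unfolded o_def]) (use inD in auto)
  have S0: "norm (S 0) \<le> 1" using d21 w1nz w12 by (simp add: S_def f0 norm_divide divide_le_eq)
  have S01: "\<not> (S z = 0 \<or> S z = 1)" if "z \<in> cball 0 1" for z
  proof
    assume "S z = 0 \<or> S z = 1"
    then have "f (z / 2) = w1 \<or> f (z / 2) = w2" using w12 by (auto simp: S_def divide_eq_1_iff)
    moreover have "f (z / 2) \<in> \<Omega>" using inD[OF that] by (simp add: \<Omega>_def)
    ultimately show False using w1 w2 by auto
  qed
  have q2: "norm (2 * q) \<le> 1/2" using q by (simp add: norm_mult)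
  have "norm (S (2 * q)) \<le> exp (pi * exp (pi * (2 + 2 * 1 + 12 * (1/2) / (1 - 1/2))))"
    by (rule Schottky[OF holS S0 S01]) (use q2 in auto)
  then have Sb: "norm (S (2 * q)) \<le> exp (pi * exp (pi * 16))" by simp
  have "f q = w1 + (w2 - w1) * S (2 * q)" using w12 by (simp add: S_def)
  then have "norm (f q) \<le> norm w1 + norm (w2 - w1) * norm (S (2 * q))"
    by (metis norm_mult norm_triangle_ineq)
  also have "\<dots> \<le> 2 + 6 * exp (pi * exp (pi * 16))"
  proof -
    have "norm (w2 - w1) \<le> 6" using d21' w1 by linarith
    then have "norm (w2 - w1) * norm (S (2 * q)) \<le> 6 * exp (pi * exp (pi * 16))"
      using Sb by (intro mult_mono) auto
    then show ?thesis using w1 by linarith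
  qed
  finally show ?thesis .
qed



lemma g_bound:
  fixes g :: "complex \<Rightarrow> complex"
  assumes holg: "g holomorphic_on ball 0 1" and g0: "g 0 = of_real \<alpha>"
    and fb: "\<And>q. norm q \<le> 1/4 \<Longrightarrow> norm (q * exp (2 * of_real pi * \<i> * g q)) \<le> B" and B: "1 \<le> B"
    and q: "norm q \<le> 1/8" and \<alpha>: "\<bar>\<alpha>\<bar> \<le> 1"
  shows "norm (g q) \<le> 1 + (ln (4 * B) + 1) / pi"
proof -
  define p where "p z = exp (2 * of_real pi * \<i> * g z)" for z
  have holp: "p holomorphic_on ball 0 1" unfolding p_def by (intro holomorphic_intros holg)
  have pb: "norm (p z) \<le> 4 * B" if "z \<in> ball 0 (1/4)" for z
  proof (rule maximum_modulus_frontier[of p "ball 0 (1/4)"])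
    show "p holomorphic_on interior (ball 0 (1/4))"
      by (rule holomorphic_on_subset[OF holp]) auto
    show "continuous_on (closure (ball 0 (1/4))) p"
      by (rule holomorphic_on_imp_continuous_on, rule holomorphic_on_subset[OF holp]) auto
    show "bounded (ball (0::complex) (1/4))" by simp
    show "z \<in> ball 0 (1/4)" using that .
    fix w :: complex assume "w \<in> frontier (ball 0 (1/4))"
    then have w: "norm w = 1/4" by (simp add: frontier_ball)
    have "norm (w * p w) \<le> B" using fb[of w] w unfolding p_def by simp
    moreover have "norm (p w) = 4 * norm (w * p w)" using w by (simp add: norm_mult)
    ultimately show "norm (p w) \<le> 4 * B" by simp
  qed
  define A where "A = ln (4 * B) + 1"
  have A0: "0 < A"
  proof -
    have "0 \<le> ln (4 * B)" using B by simp
    then show ?thesis by (simp add: A_def)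
  qed
  define v where "v z = 2 * of_real pi * \<i> * g z - 2 * of_real pi * \<i> * of_real \<alpha>" for z
  have holv: "v holomorphic_on ball 0 (1/4)" unfolding v_def
    by (intro holomorphic_intros holomorphic_on_subset[OF holg]) auto
  have v0: "v 0 = 0" by (simp add: v_def g0)
  have rev: "Re (v z) < A" if "z \<in> ball 0 (1/4)" for z
  proof -
    have "Re (v z) = Re (2 * of_real pi * \<i> * g z)" by (simp add: v_def)
    also have "\<dots> = ln (norm (p z))" by (simp add: p_def)
    also have "\<dots> \<le> ln (4 * B)" using pb[OF that] B by (subst ln_le_cancel_iff) (auto simp: p_def)
    finally show ?thesis by (simp add: A_def)
  qed
  have q4: "norm q < 1/4" using q by simp
  have "norm (v q) \<le> 2 * A * norm q / (1/4 - norm q)"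
    by (rule borel_car[OF holv _ v0 rev q4]) auto
  also have "\<dots> \<le> 2 * A"
  proof -
    have "norm q \<le> 1/4 - norm q" using q by simp
    then have "norm q / (1/4 - norm q) \<le> 1" using q4 by (simp add: divide_le_eq)
    then have "2 * A * (norm q / (1/4 - norm q)) \<le> 2 * A * 1" using A0 by (intro mult_left_mono) auto
    then show ?thesis by simp
  qed
  finally have vb: "norm (v q) \<le> 2 * A" .
  have "v q = (2 * of_real pi * \<i>) * (g q - of_real \<alpha>)" by (simp add: v_def algebra_simps)
  then have "norm (v q) = 2 * pi * norm (g q - of_real \<alpha>)" by (simp add: norm_mult)
  then have "norm (g q - of_real \<alpha>) \<le> A / pi" using vb by (simp add: field_simps)
  moreover have "norm (g q) \<le> norm (g q - of_real \<alpha>) + \<bar>\<alpha>\<bar>"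
    using norm_triangle_ineq[of "g q - of_real \<alpha>" "of_real \<alpha>"] by simp
  ultimately show ?thesis using \<alpha> by (simp add: A_def)
qed



lemma main_assembly:
  fixes \<delta> :: real and F :: "complex \<Rightarrow> complex" and Z0 Z :: complex and \<alpha> \<kappa> :: real
  assumes \<delta>: "0 < \<delta>" "\<delta> < 1"
    and \<kappa>: "\<kappa> = \<delta> * (1/8)^4 / (24 * (ln (1 + (ln (4 * (2 + 6 * exp (pi * exp (pi * 16)))) + 1) / pi) + 2))"
    and Z0: "Z0 \<in> upper_half_plane" and \<alpha>: "0 < \<alpha>" "\<alpha> < 1" and F: "F \<in> S_class \<alpha>"
    and fixp: "\<forall>W\<in>upper_half_plane. F W = W \<longrightarrow> (\<exists>n::int. W = Z0 + of_int n)"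
    and Z: "Z \<in> upper_half_plane"
    and qc: "norm (qmap Z) \<le> \<kappa> * norm (qmap Z0) * (1 + ln (1 / norm (qmap Z0))) / ln (exp 1 / \<alpha>)"
  shows "cmod (F Z - Z - complex_of_real \<alpha>) \<le> \<delta> * \<alpha>"
proof -
  define B0 where "B0 = 2 + 6 * exp (pi * exp (pi * 16))"
  define K0 where "K0 = 1 + (ln (4 * B0) + 1) / pi"
  define g where "g = gfun F \<alpha>"
  define f where "f q = q * exp (2 * of_real pi * \<i> * g q)" for q
  have holg: "g holomorphic_on ball 0 1" unfolding g_def by (rule gfun_holo[OF F])
  have g0: "g 0 = of_real \<alpha>" by (simp add: g_def gfun_def)
  have holf: "f holomorphic_on ball 0 1" unfolding f_def by (intro holomorphic_intros holg)
  have injF: "inj_on F upper_half_plane" using F by (simp add: S_class_def)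
  have fq: "f (qmap W) = qmap (F W)" if "W \<in> upper_half_plane" for W
  proof -
    have "f (qmap W) = qmap W * exp (2 * of_real pi * \<i> * (F W - W))"
      by (simp add: f_def g_def gfun_qmap[OF F that])
    also have "\<dots> = exp (2 * of_real pi * \<i> * W) * exp (2 * of_real pi * \<i> * (F W - W))"
      by (simp add: qmap_def)
    also have "\<dots> = qmap (F W)" by (simp add: qmap_def exp_add[symmetric] algebra_simps)
    finally show ?thesis .
  qed
  have f0: "f 0 = 0" by (simp add: f_def)
  have fnz: "f q \<noteq> 0" if "q \<noteq> 0" for q using that by (simp add: f_def)
  have inj: "inj_on f (ball 0 1)"
  proof (rule inj_onI)
    fix q1 q2 :: complex assume q1: "q1 \<in> ball 0 1" and q2: "q2 \<in> ball 0 1" and e: "f q1 = f q2"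
    show "q1 = q2"
    proof (cases "q1 = 0 \<or> q2 = 0")
      case True
      then show ?thesis using e f0 fnz by metis
    next
      case False
      define W1 where "W1 = Ln q1 / (2 * of_real pi * \<i>)"
      define W2 where "W2 = Ln q2 / (2 * of_real pi * \<i>)"
      have H1: "W1 \<in> upper_half_plane" using Ln_branch_H[of q1] False q1 by (simp add: W1_def)
      have H2: "W2 \<in> upper_half_plane" using Ln_branch_H[of q2] False q2 by (simp add: W2_def)
      have e1: "qmap W1 = q1" using Ln_branch(1)[of q1] False by (simp add: W1_def)
      have e2: "qmap W2 = q2" using Ln_branch(1)[of q2] False by (simp add: W2_def)
      have "qmap (F W1) = qmap (F W2)" using e fq[OF H1] fq[OF H2] e1 e2 by simp
      then obtain n :: int where n: "F W1 = F W2 + of_int n" using qmap_eq by blast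
      have H2n: "W2 + of_int n \<in> upper_half_plane" using H2 by (simp add: upper_half_plane_def)
      have "F W1 = F (W2 + of_int n)" using n S_class_shift[OF F H2, of n] by simp
      then have "W1 = W2 + of_int n" using injF H1 H2n by (meson inj_onD)
      then have "qmap W1 = qmap W2" by (simp add: qmap_add_int)
      then show ?thesis using e1 e2 by simp
    qed
  qed
  have df: "norm (deriv f 0) = 1"
  proof -
    define p where "p q = exp (2 * of_real pi * \<i> * g q)" for q
    have holp: "p holomorphic_on ball 0 1" unfolding p_def by (intro holomorphic_intros holg)
    have "(p has_field_derivative deriv p 0) (at 0)"
      using holp by (intro DERIV_deriv_iff_field_differentiable[THEN iffD2] holomorphic_on_imp_differentiable_at) auto
    from DERIV_mult[OF DERIV_ident this]
    have "((\<lambda>q. q * p q) has_field_derivative (1 * p 0 + deriv p 0 * 0)) (at 0)" by simp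
    then have "deriv f 0 = p 0" unfolding f_def p_def[symmetric] by (simp add: DERIV_imp_deriv)
    then show ?thesis by (simp add: p_def g0)
  qed
  have B0: "1 \<le> B0"
  proof -
    have "0 < exp (pi * exp (pi * 16))" by simp
    then show ?thesis unfolding B0_def by linarith
  qed
  have fb: "norm (q * exp (2 * of_real pi * \<i> * g q)) \<le> B0" if "norm q \<le> 1/4" for q
    using univalent_bound[OF holf inj f0 df that] by (simp add: f_def B0_def)
  have gb: "norm (g q) \<le> K0" if "norm q \<le> 1/8" for q
    using g_bound[OF holg g0 fb B0 that] \<alpha> by (simp add: K0_def)
  have K0: "1 \<le> K0"
  proof -
    have "0 \<le> ln (4 * B0)" using B0 by simp
    then show ?thesis by (simp add: K0_def)
  qed
  have zeros: "q = qmap Z0" if "norm q < 1" "g q = 0" for q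
  proof -
    have qnz: "q \<noteq> 0" using that g0 \<alpha> by auto
    define W where "W = Ln q / (2 * of_real pi * \<i>)"
    have H: "W \<in> upper_half_plane" using Ln_branch_H[of q] qnz that by (simp add: W_def)
    have e: "qmap W = q" using Ln_branch(1)[of q] qnz by (simp add: W_def)
    have "F W - W = 0" using that(2) gfun_qmap[OF F H] e by (simp add: g_def)
    then have "F W = W" by simp
    then obtain n :: int where "W = Z0 + of_int n" using fixp H by blast
    then show ?thesis using e by (simp add: qmap_add_int)
  qed
  have q0: "0 < norm (qmap Z0)" "norm (qmap Z0) < 1" using qmap_nz qmap_lt1[OF Z0] by auto
  have "norm (g (qmap Z) - of_real \<alpha>) \<le> \<delta> * \<alpha>"
  proof (rule final_est[OF holg _ _ K0 _ g0 \<alpha> zeros q0 \<delta> _ qc])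
    show "\<kappa> = \<delta> * (1/8)^4 / (24 * (ln K0 + 2))" by (simp add: \<kappa> K0_def B0_def)
  qed (use gb in auto)
  then show ?thesis using gfun_qmap[OF F Z] by (simp add: g_def)
qed



theorem mainTheorem12:
  fixes \<delta> :: real
  assumes "0 < \<delta>" and "\<delta> < 1/10"
  shows "\<exists>C::real. \<forall>Z0 \<alpha> F Z.
     Z0 \<in> upper_half_plane \<longrightarrow> 0 < \<alpha> \<longrightarrow> \<alpha> < 1 \<longrightarrow> F \<in> S_class \<alpha> \<longrightarrow>
     (\<forall>W\<in>upper_half_plane. F W = W \<longrightarrow> (\<exists>n::int. W = Z0 + of_int n)) \<longrightarrow>
     Z \<in> upper_half_plane \<longrightarrow>
     Im Z \<ge> Im Z0 + (1 / (2 * pi)) * (ln (ln (exp 1 / \<alpha>)) - ln (1 + 2 * pi * Im Z0)) + C \<longrightarrow>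
     cmod (F Z - Z - complex_of_real \<alpha>) \<le> \<delta> * \<alpha>"
proof -
  have \<delta>: "0 < \<delta>" "\<delta> < 1" using assms by auto
  define \<kappa> where "\<kappa> = \<delta> * (1/8)^4 / (24 * (ln (1 + (ln (4 * (2 + 6 * exp (pi * exp (pi * 16)))) + 1) / pi) + 2))"
  have kp: "0 < \<kappa>"
  proof -
    have "0 \<le> ln (4 * (2 + 6 * exp (pi * exp (pi * 16))))"
      by (subst ln_ge_zero_iff) (auto intro: add_pos_nonneg)
    then have "0 \<le> (ln (4 * (2 + 6 * exp (pi * exp (pi * 16)))) + 1) / pi" by simp
    then have D0: "0 \<le> ln (1 + (ln (4 * (2 + 6 * exp (pi * exp (pi * 16)))) + 1) / pi)" by simp
    have "0 < 24 * (ln (1 + (ln (4 * (2 + 6 * exp (pi * exp (pi * 16)))) + 1) / pi) + 2)"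
      using D0 by (intro mult_pos_pos add_nonneg_pos) auto
    then show ?thesis unfolding \<kappa>_def using \<delta> by (intro divide_pos_pos mult_pos_pos) auto
  qed
  define C where "C = - ln \<kappa> / (2 * pi)"
  show ?thesis
  proof (intro exI[of _ C] allI impI)
    fix Z0 Z :: complex and \<alpha> :: real and F :: "complex \<Rightarrow> complex"
    assume Z0: "Z0 \<in> upper_half_plane" and a0: "0 < \<alpha>" and a1: "\<alpha> < 1" and F: "F \<in> S_class \<alpha>"
      and fixp: "\<forall>W\<in>upper_half_plane. F W = W \<longrightarrow> (\<exists>n::int. W = Z0 + of_int n)"
      and Z: "Z \<in> upper_half_plane"
      and hI: "Im Z \<ge> Im Z0 + (1 / (2 * pi)) * (ln (ln (exp 1 / \<alpha>)) - ln (1 + 2 * pi * Im Z0)) + C"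
    define L where "L = ln (exp 1 / \<alpha>)"
    define Y0 where "Y0 = Im Z0"
    have Y0: "0 < Y0" using Z0 by (simp add: Y0_def upper_half_plane_def)
    have L: "0 < L"
    proof -
      have "L = 1 - ln \<alpha>" using a0 by (simp add: L_def ln_div)
      moreover have "ln \<alpha> < 0" using a0 a1 by simp
      ultimately show ?thesis by simp
    qed
    have P: "0 < 1 + 2 * pi * Y0" using Y0 by (simp add: add_pos_pos)
    have "- 2 * pi * Im Z \<le> - 2 * pi * (Y0 + (1 / (2 * pi)) * (ln L - ln (1 + 2 * pi * Y0)) + C)"
      using hI by (simp add: L_def Y0_def)
    also have "\<dots> = - 2 * pi * Y0 - ln L + ln (1 + 2 * pi * Y0) + ln \<kappa>"
      by (simp add: C_def field_simps)
    finally have ineq: "- 2 * pi * Im Z \<le> - 2 * pi * Y0 - ln L + ln (1 + 2 * pi * Y0) + ln \<kappa>" .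
    have "norm (qmap Z) = exp (- 2 * pi * Im Z)" by (rule qmap_norm)
    also have "\<dots> \<le> exp (- 2 * pi * Y0 - ln L + ln (1 + 2 * pi * Y0) + ln \<kappa>)" using ineq by simp
    also have "\<dots> = exp (- 2 * pi * Y0) / L * (1 + 2 * pi * Y0) * \<kappa>"
      using L P kp by (simp add: exp_add exp_diff)
    also have "\<dots> = \<kappa> * norm (qmap Z0) * (1 + ln (1 / norm (qmap Z0))) / L"
      by (simp add: qmap_norm Y0_def ln_div)
    finally have qc: "norm (qmap Z) \<le> \<kappa> * norm (qmap Z0) * (1 + ln (1 / norm (qmap Z0))) / ln (exp 1 / \<alpha>)"
      by (simp add: L_def)
    show "cmod (F Z - Z - complex_of_real \<alpha>) \<le> \<delta> * \<alpha>"
      by (rule main_assembly[OF \<delta> \<kappa>_def Z0 a0 a1 F fixp Z qc])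
  qed
qed

end
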